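(* Let $U\subset\mathbb{R}^m$ be open and connected and let $\phi=(\phi^1,\dots,\phi^n):U\to\mathbb{R}^n$ be a smooth horizontally weakly conformal map. Let $\Phi:U\times\mathbb{R}^m\to\mathbb{R}^n$, $\Phi^k(x,y)=\sum_{i=1}^m\frac{\partial\phi^k}{\partial x_i}(x)\,y_i$, be its complete lift. Then $\Phi$ is horizontally weakly conformal if and only if, at every $x\in U$, for all $\alpha,\beta\in\{1,\dots,n\}$, $$(\operatorname{hess}\phi^\alpha)^2=(\operatorname{hess}\phi^\beta)^2,$$ and for all $\alpha\neq\beta$, $$(\operatorname{hess}\phi^\alpha)(\operatorname{hess}\phi^\beta)=-(\operatorname{hess}\phi^\beta)(\operatorname{hess}\phi^\alpha),$$ where $\operatorname{hess}\phi^\alpha$ denotes the $m\times m$ Hessian matrix $\big(\frac{\partial^2\phi^\alpha}{\partial x_i\partial x_j}\big)$.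
   Context: A smooth map $\psi=(\psi^1,\dots,\psi^n)$ from an open subset of $\mathbb{R}^N$ to $\mathbb{R}^n$ is horizontally weakly conformal if there is a function $\lambda$ with $\sum_{i=1}^N\frac{\partial\psi^k}{\partial x_i}\frac{\partial\psi^l}{\partial x_i}=\lambda^2\delta_{kl}$ for all $k,l=1,\dots,n$ at every point. For $\Phi$ the coordinates are $(x_1,\dots,x_m,y_1,\dots,y_m)$. *)

theory Defs
  imports "HOL-Analysis.Analysis"
begin

definition pderiv_dir :: "('a::euclidean_space \<Rightarrow> real) \<Rightarrow> 'a \<Rightarrow> 'a \<Rightarrow> real" where
  "pderiv_dir f b x = frechet_derivative f (at x) b"

fun Ck_on :: "nat \<Rightarrow> 'a::euclidean_space set \<Rightarrow> ('a \<Rightarrow> real) \<Rightarrow> bool" where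
  "Ck_on 0 S f = continuous_on S f"
| "Ck_on (Suc k) S f = (f differentiable_on S \<and> (\<forall>b\<in>Basis. Ck_on k S (pderiv_dir f b)))"

definition smooth_on :: "'a::euclidean_space set \<Rightarrow> ('a \<Rightarrow> real ^ 'n) \<Rightarrow> bool" where
  "smooth_on S f \<longleftrightarrow> (\<forall>k. \<forall>c. Ck_on k S (\<lambda>x. f x $ c))"

definition horiz_weakly_conformal :: "'a::euclidean_space set \<Rightarrow> ('a \<Rightarrow> real ^ 'n) \<Rightarrow> bool" where
  "horiz_weakly_conformal S \<psi> \<longleftrightarrow>
     (\<exists>lam::'a \<Rightarrow> real. \<forall>x\<in>S. \<forall>k l.
        (\<Sum>b\<in>Basis. pderiv_dir (\<lambda>z. \<psi> z $ k) b x * pderiv_dir (\<lambda>z. \<psi> z $ l) b x)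
          = (lam x)\<^sup>2 * (if k = l then 1 else 0))"

definition hess :: "(real ^ 'm \<Rightarrow> real) \<Rightarrow> real ^ 'm \<Rightarrow> real ^ 'm ^ 'm" where
  "hess f x = (\<chi> i j. pderiv_dir (pderiv_dir f (axis j 1)) (axis i 1) x)"

definition complete_lift :: "(real ^ 'm \<Rightarrow> real ^ 'n) \<Rightarrow> (real ^ 'm) \<times> (real ^ 'm) \<Rightarrow> real ^ 'n" where
  "complete_lift \<phi> = (\<lambda>(x, y). \<chi> k. \<Sum>i\<in>UNIV. pderiv_dir (\<lambda>z. \<phi> z $ k) (axis i 1) x * y $ i)"

end

theory Submission imports Defs begin

lemma deriv_line:
  fixes f :: "'a::euclidean_space \<Rightarrow> real"
  assumes "f differentiable at (q + s *\<^sub>R u)"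
  shows "((\<lambda>s. f (q + s *\<^sub>R u)) has_derivative (\<lambda>d. d * pderiv_dir f u (q + s *\<^sub>R u))) (at s within S)"
proof -
  have 1: "((\<lambda>s. q + s *\<^sub>R u) has_derivative (\<lambda>d. d *\<^sub>R u)) (at s within S)"
    by (auto intro!: derivative_eq_intros)
  have 2: "(f has_derivative frechet_derivative f (at (q + s *\<^sub>R u))) (at (q + s *\<^sub>R u))"
    using assms frechet_derivative_works by blast
  have "((f \<circ> (\<lambda>s. q + s *\<^sub>R u)) has_derivative (frechet_derivative f (at (q + s *\<^sub>R u)) \<circ> (\<lambda>d. d *\<^sub>R u))) (at s within S)"
    by (rule diff_chain_within[OF 1]) (rule has_derivative_at_withinI[OF 2])
  moreover have "linear (frechet_derivative f (at (q + s *\<^sub>R u)))"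
    using 2 has_derivative_linear by blast
  ultimately show ?thesis
    by (simp add: o_def pderiv_dir_def linear_scale)
qed

lemma second_diff:
  fixes f :: "'a::euclidean_space \<Rightarrow> real"
  assumes h: "0 < h"
    and inU: "\<And>s t. s \<in> {0..h} \<Longrightarrow> t \<in> {0..h} \<Longrightarrow> x + s *\<^sub>R u + t *\<^sub>R v \<in> U"
    and d1: "f differentiable_on U" and d2: "pderiv_dir f u differentiable_on U" and U: "open U"
  shows "\<exists>p. (\<exists>s\<in>{0..h}. \<exists>t\<in>{0..h}. p = x + s *\<^sub>R u + t *\<^sub>R v) \<and>
     f (x + h *\<^sub>R u + h *\<^sub>R v) - f (x + h *\<^sub>R u) - f (x + h *\<^sub>R v) + f x = h * h * pderiv_dir (pderiv_dir f u) v p"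
proof -
  have dat: "g differentiable at z" if "g differentiable_on U" "z \<in> U" for g :: "'a \<Rightarrow> real" and z
    using that U by (simp add: differentiable_on_eq_differentiable_at)
  define G where "G s = f ((x + h *\<^sub>R v) + s *\<^sub>R u) - f (x + s *\<^sub>R u)" for s
  have "\<exists>s\<in>{0<..<h}. G h - G 0 = (\<lambda>d. d * pderiv_dir f u ((x + h *\<^sub>R v) + s *\<^sub>R u) - d * pderiv_dir f u (x + s *\<^sub>R u)) (h - 0)"
    unfolding G_def
  proof (rule mvt_simple[OF h])
    fix s assume s: "0 \<le> s" "s \<le> h"
    have a: "(x + h *\<^sub>R v) + s *\<^sub>R u \<in> U" using inU[of s h] s h by (simp add: add_ac)
    have b: "x + s *\<^sub>R u \<in> U" using inU[of s 0] s h by simp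
    show "((\<lambda>s. f (x + h *\<^sub>R v + s *\<^sub>R u) - f (x + s *\<^sub>R u)) has_derivative
        (\<lambda>d. d * pderiv_dir f u (x + h *\<^sub>R v + s *\<^sub>R u) - d * pderiv_dir f u (x + s *\<^sub>R u))) (at s within {0..h})"
      by (intro has_derivative_diff deriv_line dat[OF d1] a b)
  qed
  then obtain s where s: "s \<in> {0<..<h}" and
    eq1: "G h - G 0 = h * (pderiv_dir f u ((x + s *\<^sub>R u) + h *\<^sub>R v) - pderiv_dir f u ((x + s *\<^sub>R u) + 0 *\<^sub>R v))"
    by (auto simp: algebra_simps)
  have "\<exists>t\<in>{0<..<h}. pderiv_dir f u ((x + s *\<^sub>R u) + h *\<^sub>R v) - pderiv_dir f u ((x + s *\<^sub>R u) + 0 *\<^sub>R v)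
     = (\<lambda>d. d * pderiv_dir (pderiv_dir f u) v ((x + s *\<^sub>R u) + t *\<^sub>R v)) (h - 0)"
  proof (rule mvt_simple[OF h])
    fix t assume t: "0 \<le> t" "t \<le> h"
    have a: "(x + s *\<^sub>R u) + t *\<^sub>R v \<in> U" using inU[of s t] s t by simp
    show "((\<lambda>t. pderiv_dir f u (x + s *\<^sub>R u + t *\<^sub>R v)) has_derivative
        (\<lambda>d. d * pderiv_dir (pderiv_dir f u) v (x + s *\<^sub>R u + t *\<^sub>R v))) (at t within {0..h})"
      by (intro deriv_line dat[OF d2] a)
  qed
  then obtain t where t: "t \<in> {0<..<h}" and
    eq2: "pderiv_dir f u ((x + s *\<^sub>R u) + h *\<^sub>R v) - pderiv_dir f u ((x + s *\<^sub>R u) + 0 *\<^sub>R v)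
       = h * pderiv_dir (pderiv_dir f u) v ((x + s *\<^sub>R u) + t *\<^sub>R v)" by auto
  have "f (x + h *\<^sub>R u + h *\<^sub>R v) - f (x + h *\<^sub>R u) - f (x + h *\<^sub>R v) + f x = G h - G 0"
    by (simp add: G_def add_ac)
  also have "\<dots> = h * h * pderiv_dir (pderiv_dir f u) v ((x + s *\<^sub>R u) + t *\<^sub>R v)"
    using eq1 eq2 by simp
  finally show ?thesis using s t
    by (intro exI[of _ "(x + s *\<^sub>R u) + t *\<^sub>R v"] conjI bexI[of _ s] bexI[of _ t]) auto
qed

lemma schwarz:
  fixes f :: "'a::euclidean_space \<Rightarrow> real"
  assumes U: "open U" and x: "x \<in> U"
    and d1: "f differentiable_on U" and du: "pderiv_dir f u differentiable_on U"
    and dv: "pderiv_dir f v differentiable_on U"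
    and cu: "continuous_on U (pderiv_dir (pderiv_dir f u) v)"
    and cv: "continuous_on U (pderiv_dir (pderiv_dir f v) u)"
  shows "pderiv_dir (pderiv_dir f u) v x = pderiv_dir (pderiv_dir f v) u x"
proof (rule ccontr)
  let ?F1 = "pderiv_dir (pderiv_dir f u) v" and ?F2 = "pderiv_dir (pderiv_dir f v) u"
  let ?a = "?F1 x" and ?b = "?F2 x"
  assume ne: "?a \<noteq> ?b"
  define e where "e = \<bar>?a - ?b\<bar> / 2"
  have e: "e > 0" using ne by (simp add: e_def)
  obtain r where r: "r > 0" "ball x r \<subseteq> U" using U x open_contains_ball by blast
  obtain d1 where d1': "d1 > 0" "\<And>p. p \<in> U \<Longrightarrow> dist p x < d1 \<Longrightarrow> dist (?F1 p) ?a < e"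
    using cu x e unfolding continuous_on_iff by metis
  obtain d2 where d2': "d2 > 0" "\<And>p. p \<in> U \<Longrightarrow> dist p x < d2 \<Longrightarrow> dist (?F2 p) ?b < e"
    using cv x e unfolding continuous_on_iff by metis
  define R where "R = min r (min d1 d2)"
  have R: "R > 0" "R \<le> r" "R \<le> d1" "R \<le> d2" using r d1' d2' by (auto simp: R_def)
  define h where "h = R / (2 * (norm u + norm v + 1))"
  have nn: "norm u + norm v + 1 > 0" by (simp add: add_nonneg_pos)
  have h: "h > 0" using R nn by (simp add: h_def)
  have close: "dist (x + s *\<^sub>R u + t *\<^sub>R v) x < R" if "s \<in> {0..h}" "t \<in> {0..h}" for s t
  proof -
    have "dist (x + s *\<^sub>R u + t *\<^sub>R v) x = norm (s *\<^sub>R u + t *\<^sub>R v)" by (simp add: dist_norm)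
    also have "\<dots> \<le> s * norm u + t * norm v"
      using that norm_triangle_ineq[of "s *\<^sub>R u" "t *\<^sub>R v"] by auto
    also have "\<dots> \<le> h * norm u + h * norm v"
      using that by (intro add_mono mult_right_mono) auto
    also have "\<dots> < h * (2 * (norm u + norm v + 1))"
      using h by (simp add: algebra_simps add_nonneg_pos)
    also have "\<dots> = R" using nn by (simp add: h_def)
    finally show ?thesis .
  qed
  have inU: "x + s *\<^sub>R u + t *\<^sub>R v \<in> U" if "s \<in> {0..h}" "t \<in> {0..h}" for s t
    using close[OF that] R r by (auto simp: dist_commute)
  have inU': "x + s *\<^sub>R v + t *\<^sub>R u \<in> U" if "s \<in> {0..h}" "t \<in> {0..h}" for s t
    using inU[OF that(2,1)] by (simp add: add_ac)
  obtain p1 where p1: "\<exists>s\<in>{0..h}. \<exists>t\<in>{0..h}. p1 = x + s *\<^sub>R u + t *\<^sub>R v"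
    "f (x + h *\<^sub>R u + h *\<^sub>R v) - f (x + h *\<^sub>R u) - f (x + h *\<^sub>R v) + f x = h * h * ?F1 p1"
    using second_diff[OF h inU d1 du U] by blast
  obtain p2 where p2: "\<exists>s\<in>{0..h}. \<exists>t\<in>{0..h}. p2 = x + s *\<^sub>R v + t *\<^sub>R u"
    "f (x + h *\<^sub>R v + h *\<^sub>R u) - f (x + h *\<^sub>R v) - f (x + h *\<^sub>R u) + f x = h * h * ?F2 p2"
    using second_diff[OF h inU' d1 dv U] by blast
  have ee: "x + h *\<^sub>R v + h *\<^sub>R u = x + h *\<^sub>R u + h *\<^sub>R v" by (simp add: add_ac)
  have "f (x + h *\<^sub>R u + h *\<^sub>R v) - f (x + h *\<^sub>R v) - f (x + h *\<^sub>R u) + f x = h * h * ?F2 p2"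
    using p2(2) unfolding ee .
  hence "h * h * ?F1 p1 = h * h * ?F2 p2" using p1(2) by linarith
  hence eq: "?F1 p1 = ?F2 p2" using h by simp
  have p1U: "p1 \<in> U" "dist p1 x < R" using p1(1) inU close by auto
  have p2U: "p2 \<in> U" "dist p2 x < R" using p2(1) inU'
    by (auto, metis close add.commute add.assoc)
  have "dist (?F1 p1) ?a < e" using d1'(2)[OF p1U(1)] p1U(2) R by simp
  moreover have "dist (?F2 p2) ?b < e" using d2'(2)[OF p2U(1)] p2U(2) R by simp
  ultimately have "\<bar>?a - ?b\<bar> < 2 * e" using eq by (simp add: dist_real_def)
  thus False by (simp add: e_def)
qed


lemma sum_Basis_vec:
  "(\<Sum>b\<in>(Basis::(real^'m) set). F b) = (\<Sum>i\<in>UNIV. F (axis i 1))"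
proof -
  have "(Basis::(real^'m) set) = range (\<lambda>i. axis i 1)" by (auto simp: Basis_vec_def)
  moreover have "inj (\<lambda>i::'m. axis i (1::real))" by (auto intro!: injI simp: axis_eq_axis)
  ultimately show ?thesis using sum.reindex[of "\<lambda>i::'m. axis i (1::real)" UNIV F] by (simp add: o_def)
qed

lemma sum_Basis_prod:
  "(\<Sum>b\<in>(Basis::('a::euclidean_space \<times> 'b::euclidean_space) set). F b)
     = (\<Sum>u\<in>Basis. F (u, 0)) + (\<Sum>v\<in>Basis. F (0, v))"
proof -
  have "inj_on (\<lambda>u. (u::'a, 0::'b)) Basis" "inj_on (\<lambda>u. (0::'a, u::'b)) Basis"
    by (auto intro!: inj_onI)
  thus ?thesis
    unfolding Basis_prod_def
    by (subst sum.union_disjoint) (auto simp: Basis_prod_def sum.reindex)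
qed

lemma quad_zero_imp:
  fixes A :: "real^'m^'m"
  assumes "\<And>y. y \<bullet> (A *v y) = 0"
  shows "A = - transpose A"
proof -
  have B: "axis i 1 \<bullet> (A *v axis j 1) = A $ i $ j" for i j
  proof -
    have "(A *v axis j 1) $ i = A $ i $ j"
      by (simp add: matrix_vector_mult_def axis_def if_distrib sum.delta cong: if_cong)
    thus ?thesis by (simp add: inner_axis')
  qed
  have "A $ i $ j + A $ j $ i = 0" for i j
  proof -
    have "(axis i 1 + axis j 1) \<bullet> (A *v (axis i 1 + axis j 1)) = 0" by (rule assms)
    hence "axis i 1 \<bullet> (A *v axis i 1) + axis i 1 \<bullet> (A *v axis j 1) + axis j 1 \<bullet> (A *v axis i 1)
       + axis j 1 \<bullet> (A *v axis j 1) = 0"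
      by (simp add: matrix_vector_right_distrib inner_add_left inner_add_right)
    thus ?thesis using assms[of "axis i 1"] assms[of "axis j 1"] by (simp add: B)
  qed
  thus ?thesis by (simp add: vec_eq_iff transpose_def eq_neg_iff_add_eq_0)
qed

lemma quad_zero_if:
  fixes A :: "real^'m^'m"
  assumes "A = - transpose A"
  shows "y \<bullet> (A *v y) = 0"
proof -
  have c: "A $ i $ j = - A $ j $ i" for i j
  proof -
    have "A $ i $ j = (- transpose A) $ i $ j" by (rule arg_cong[where f="\<lambda>M. M $ i $ j", OF assms])
    thus ?thesis by (simp add: transpose_def)
  qed
  have vA: "y v* A = - (A *v y)"
  proof -
    have "(\<Sum>i\<in>UNIV. y $ i * A $ i $ j) = - (\<Sum>i\<in>UNIV. A $ j $ i * y $ i)" for j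
    proof (subst sum_negf[symmetric], rule sum.cong[OF refl])
      fix i show "y $ i * A $ i $ j = - (A $ j $ i * y $ i)" using c[of i j] by simp
    qed
    thus ?thesis by (simp add: vec_eq_iff vector_matrix_mult_def matrix_vector_mult_def)
  qed
  have "y \<bullet> (A *v y) = (y v* A) \<bullet> y" by (simp add: dot_lmul_matrix)
  also have "\<dots> = - (y \<bullet> (A *v y))" by (simp add: vA inner_commute)
  finally show ?thesis by simp
qed

lemma inner_mv:
  fixes A B :: "real^'m^'m"
  shows "(A *v y) \<bullet> (B *v y) = y \<bullet> ((transpose A ** B) *v y)"
  by (metis dot_lmul_matrix matrix_vector_mul_assoc vector_transpose_matrix)


lemma lift_eq: "(\<lambda>z. complete_lift \<phi> z $ k) = (\<lambda>z. \<Sum>i\<in>UNIV. pderiv_dir (\<lambda>z. \<phi> z $ k) (axis i 1) (fst z) * snd z $ i)"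
  by (auto simp: complete_lift_def split: prod.splits)

lemma lift_deriv:
  fixes g :: "'m::finite \<Rightarrow> real^'m \<Rightarrow> real"
  assumes "\<And>i. g i differentiable at x"
  shows "((\<lambda>z. \<Sum>i\<in>UNIV. g i (fst z) * snd z $ i) has_derivative
     (\<lambda>d. \<Sum>i\<in>UNIV. g i x * snd d $ i + frechet_derivative (g i) (at x) (fst d) * y $ i)) (at (x, y))"
proof (rule has_derivative_sum)
  fix i
  have 1: "((\<lambda>z. g i (fst z)) has_derivative (\<lambda>d. frechet_derivative (g i) (at x) (fst d))) (at (x, y))"
  proof -
    have "(g i has_derivative frechet_derivative (g i) (at x)) (at (fst (x,y)))"
      using assms[of i] frechet_derivative_works by (simp del: frechet_derivative_works) blast
    from diff_chain_at[OF has_derivative_fst[OF has_derivative_ident] this]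
    show ?thesis by (simp add: o_def)
  qed
  have 2: "((\<lambda>z. snd z $ i) has_derivative (\<lambda>d. snd d $ i)) (at (x, y))"
  proof -
    have "bounded_linear (\<lambda>d::(real^'m) \<times> (real^'m). snd d $ i)"
      using bounded_linear_compose[OF bounded_linear_vec_nth[of i] bounded_linear_snd] by (simp add: o_def)
    thus ?thesis by (rule bounded_linear_imp_has_derivative)
  qed
  show "((\<lambda>z. g i (fst z) * snd z $ i) has_derivative
     (\<lambda>d. g i x * snd d $ i + frechet_derivative (g i) (at x) (fst d) * y $ i)) (at (x, y))"
    using has_derivative_mult[OF 1 2] by simp
qed


lemma neg_self_zero:
  fixes M :: "real^'m^'m"
  assumes "M = - transpose M" "transpose M = M"
  shows "M = 0"
proof -
  have "M = - M" using assms by metis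
  have "M $ i $ j = 0" for i j
    using arg_cong[where f="\<lambda>N. N $ i $ j", OF \<open>M = - M\<close>] by simp
  thus ?thesis by (simp add: vec_eq_iff)
qed

theorem theorem2p7:
  fixes U :: "(real ^ 'm) set" and \<phi> :: "real ^ 'm \<Rightarrow> real ^ 'n"
  assumes "open U" and "connected U"
    and "smooth_on U \<phi>"
    and "horiz_weakly_conformal U \<phi>"
  shows "horiz_weakly_conformal (U \<times> UNIV) (complete_lift \<phi>) \<longleftrightarrow>
    (\<forall>x\<in>U. (\<forall>\<alpha> \<beta>. hess (\<lambda>z. \<phi> z $ \<alpha>) x ** hess (\<lambda>z. \<phi> z $ \<alpha>) x
                   = hess (\<lambda>z. \<phi> z $ \<beta>) x ** hess (\<lambda>z. \<phi> z $ \<beta>) x)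
          \<and> (\<forall>\<alpha> \<beta>. \<alpha> \<noteq> \<beta> \<longrightarrow> hess (\<lambda>z. \<phi> z $ \<alpha>) x ** hess (\<lambda>z. \<phi> z $ \<beta>) x
                   = - (hess (\<lambda>z. \<phi> z $ \<beta>) x ** hess (\<lambda>z. \<phi> z $ \<alpha>) x)))"
proof -
  note U = \<open>open U\<close>
  define P where "P k = (\<lambda>z. \<phi> z $ k)" for k
  define H where "H k x = hess (P k) x" for k x
  define g where "g k i = pderiv_dir (P k) (axis i 1)" for k i
  have ax: "axis i (1::real) \<in> Basis" for i :: 'm by simp
  have C2: "Ck_on (Suc (Suc 0)) U (P k)" for k
    using assms(3) unfolding smooth_on_def P_def by blast
  have dP: "P k differentiable_on U" for k using C2 by simp
  have d2: "pderiv_dir (P k) b differentiable_on U" if "b \<in> Basis" for k b using C2 that by simp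
  have c2: "continuous_on U (pderiv_dir (pderiv_dir (P k) b) b')" if "b \<in> Basis" "b' \<in> Basis" for k b b'
    using C2 that by simp
  have dat: "f differentiable at z" if "f differentiable_on U" "z \<in> U" for f :: "real^'m \<Rightarrow> real" and z
    using that U by (simp add: differentiable_on_eq_differentiable_at)
  have sym: "transpose (H k x) = H k x" if x: "x \<in> U" for k x
  proof -
    have "pderiv_dir (pderiv_dir (P k) (axis i 1)) (axis j 1) x = pderiv_dir (pderiv_dir (P k) (axis j 1)) (axis i 1) x" for i j
      by (rule schwarz[OF U x dP d2[OF ax] d2[OF ax] c2[OF ax ax] c2[OF ax ax]])
    thus ?thesis by (simp add: H_def hess_def transpose_def vec_eq_iff)
  qed
  obtain lam where lam: "\<And>x k l. x \<in> U \<Longrightarrow>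
      (\<Sum>i\<in>UNIV. g k i x * g l i x) = (lam x)\<^sup>2 * (if k = l then 1 else 0)"
    using assms(4) unfolding horiz_weakly_conformal_def sum_Basis_vec g_def P_def by blast
  have pd1: "pderiv_dir (\<lambda>z. complete_lift \<phi> z $ k) (axis j 1, 0) (x, y) = (H k x *v y) $ j"
   and pd2: "pderiv_dir (\<lambda>z. complete_lift \<phi> z $ k) (0, axis j 1) (x, y) = g k j x"
    if x: "x \<in> U" for k j x y
  proof -
    have "((\<lambda>z. complete_lift \<phi> z $ k) has_derivative
     (\<lambda>d. \<Sum>i\<in>UNIV. g k i x * snd d $ i + frechet_derivative (g k i) (at x) (fst d) * y $ i)) (at (x, y))"
      unfolding lift_eq g_def[symmetric] P_def[symmetric]
      by (rule lift_deriv) (use dat[OF d2[OF ax] x] in \<open>simp add: g_def\<close>)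
    hence fd: "frechet_derivative (\<lambda>z. complete_lift \<phi> z $ k) (at (x, y)) =
       (\<lambda>d. \<Sum>i\<in>UNIV. g k i x * snd d $ i + frechet_derivative (g k i) (at x) (fst d) * y $ i)"
      by (rule frechet_derivative_at[symmetric])
    show "pderiv_dir (\<lambda>z. complete_lift \<phi> z $ k) (axis j 1, 0) (x, y) = (H k x *v y) $ j"
      by (simp add: pderiv_dir_def fd matrix_vector_mult_def H_def hess_def g_def)
    show "pderiv_dir (\<lambda>z. complete_lift \<phi> z $ k) (0, axis j 1) (x, y) = g k j x"
    proof -
      have "frechet_derivative (g k i) (at x) 0 = 0" for i
        using dat[OF d2[OF ax] x] frechet_derivative_works has_derivative_linear linear_0
        unfolding g_def by metis
      thus ?thesis
        by (simp add: pderiv_dir_def fd axis_def mult.commute[of "g k _ x"] if_distrib[of "\<lambda>t. t * _"] cong: if_cong)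
    qed
  qed
  have KF: "(\<Sum>b\<in>Basis. pderiv_dir (\<lambda>z. complete_lift \<phi> z $ k) b (x, y) * pderiv_dir (\<lambda>z. complete_lift \<phi> z $ l) b (x, y))
     = y \<bullet> ((H k x ** H l x) *v y) + (lam x)\<^sup>2 * (if k = l then 1 else 0)" if x: "x \<in> U" for k l x y
  proof -
    have "(\<Sum>b\<in>Basis. pderiv_dir (\<lambda>z. complete_lift \<phi> z $ k) b (x, y) * pderiv_dir (\<lambda>z. complete_lift \<phi> z $ l) b (x, y))
      = (H k x *v y) \<bullet> (H l x *v y) + (\<Sum>i\<in>UNIV. g k i x * g l i x)"
      unfolding sum_Basis_prod sum_Basis_vec by (simp add: pd1[OF x] pd2[OF x] inner_vec_def)
    also have "(H k x *v y) \<bullet> (H l x *v y) = y \<bullet> ((H k x ** H l x) *v y)"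
      using inner_mv[of "H k x" y "H l x"] sym[OF x, of k] by simp
    finally show ?thesis using lam[OF x] by simp
  qed
  have Qnn: "y \<bullet> ((H k x ** H k x) *v y) \<ge> 0" if x: "x \<in> U" for k x y
    using inner_mv[of "H k x" y "H k x"] sym[OF x, of k] by (metis inner_ge_zero)
  show ?thesis
  proof
    assume "horiz_weakly_conformal (U \<times> UNIV) (complete_lift \<phi>)"
    then obtain La0 where La0: "\<forall>p\<in>U \<times> UNIV. \<forall>k l. (\<Sum>b\<in>Basis.
        pderiv_dir (\<lambda>z. complete_lift \<phi> z $ k) b p * pderiv_dir (\<lambda>z. complete_lift \<phi> z $ l) b p)
        = (La0 p)\<^sup>2 * (if k = l then 1 else 0)"
      unfolding horiz_weakly_conformal_def by blast
    obtain La where La: "\<And>x y k l. x \<in> U \<Longrightarrow> y \<bullet> ((H k x ** H l x) *v y) + (lam x)\<^sup>2 * (if k = l then 1 else 0)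
        = (La (x, y))\<^sup>2 * (if k = l then 1 else 0)"
    proof
      fix x y k l assume x: "x \<in> U"
      show "y \<bullet> ((H k x ** H l x) *v y) + (lam x)\<^sup>2 * (if k = l then 1 else 0)
        = (La0 (x, y))\<^sup>2 * (if k = l then 1 else 0)"
        using KF[OF x, where k=k and l=l and y=y] La0 x by auto
    qed
    show "\<forall>x\<in>U. (\<forall>\<alpha> \<beta>. hess (\<lambda>z. \<phi> z $ \<alpha>) x ** hess (\<lambda>z. \<phi> z $ \<alpha>) x
                   = hess (\<lambda>z. \<phi> z $ \<beta>) x ** hess (\<lambda>z. \<phi> z $ \<beta>) x)
          \<and> (\<forall>\<alpha> \<beta>. \<alpha> \<noteq> \<beta> \<longrightarrow> hess (\<lambda>z. \<phi> z $ \<alpha>) x ** hess (\<lambda>z. \<phi> z $ \<beta>) x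
                   = - (hess (\<lambda>z. \<phi> z $ \<beta>) x ** hess (\<lambda>z. \<phi> z $ \<alpha>) x))"
      unfolding P_def[symmetric] H_def[symmetric]
    proof (intro ballI conjI allI impI)
      fix x and a b :: 'n assume x: "x \<in> U"
      let ?M = "H a x ** H a x - H b x ** H b x"
      have "y \<bullet> (?M *v y) = 0" for y
        using La[OF x, of y a a] La[OF x, of y b b]
        by (simp add: matrix_vector_mult_diff_rdistrib inner_diff_right)
      hence "?M = - transpose ?M" by (rule quad_zero_imp)
      moreover have "transpose ?M = ?M"
      proof -
        have tr: "transpose (A - B) = transpose A - transpose B" for A B :: "real^'m^'m"
          by (simp add: transpose_def vec_eq_iff)
        show ?thesis unfolding tr by (simp add: matrix_transpose_mul sym[OF x])
      qed
      ultimately have "?M = 0"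
        by (metis neg_self_zero)
      thus "H a x ** H a x = H b x ** H b x" by simp
    next
      fix x and a b :: 'n assume x: "x \<in> U" and ab: "a \<noteq> b"
      have "y \<bullet> ((H a x ** H b x) *v y) = 0" for y
        using La[OF x, of y a b] ab by simp
      hence "H a x ** H b x = - transpose (H a x ** H b x)" by (rule quad_zero_imp)
      thus "H a x ** H b x = - (H b x ** H a x)"
        by (simp add: matrix_transpose_mul sym[OF x])
    qed
  next
    assume R: "\<forall>x\<in>U. (\<forall>\<alpha> \<beta>. hess (\<lambda>z. \<phi> z $ \<alpha>) x ** hess (\<lambda>z. \<phi> z $ \<alpha>) x
                   = hess (\<lambda>z. \<phi> z $ \<beta>) x ** hess (\<lambda>z. \<phi> z $ \<beta>) x)
          \<and> (\<forall>\<alpha> \<beta>. \<alpha> \<noteq> \<beta> \<longrightarrow> hess (\<lambda>z. \<phi> z $ \<alpha>) x ** hess (\<lambda>z. \<phi> z $ \<beta>) x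
                   = - (hess (\<lambda>z. \<phi> z $ \<beta>) x ** hess (\<lambda>z. \<phi> z $ \<alpha>) x))"
    hence R1: "\<And>x a b. x \<in> U \<Longrightarrow> H a x ** H a x = H b x ** H b x"
      and R2: "\<And>x a b. x \<in> U \<Longrightarrow> a \<noteq> b \<Longrightarrow> H a x ** H b x = - (H b x ** H a x)"
      unfolding H_def P_def by blast+
    fix k0 :: 'n
    define La where "La p = sqrt (snd p \<bullet> ((H k0 (fst p) ** H k0 (fst p)) *v snd p) + (lam (fst p))\<^sup>2)" for p
    show "horiz_weakly_conformal (U \<times> UNIV) (complete_lift \<phi>)"
      unfolding horiz_weakly_conformal_def
    proof (intro exI[of _ La] ballI allI)
      fix p :: "(real^'m) \<times> (real^'m)" and k l :: 'n assume p: "p \<in> U \<times> UNIV"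
      obtain x y where pxy: "p = (x, y)" and x: "x \<in> U" using p by auto
      show "(\<Sum>b\<in>Basis. pderiv_dir (\<lambda>z. complete_lift \<phi> z $ k) b p * pderiv_dir (\<lambda>z. complete_lift \<phi> z $ l) b p)
          = (La p)\<^sup>2 * (if k = l then 1 else 0)"
      proof (cases "k = l")
        case True
        have "(La p)\<^sup>2 = y \<bullet> ((H k0 x ** H k0 x) *v y) + (lam x)\<^sup>2"
          unfolding La_def pxy using Qnn[OF x, where y=y and k=k0] by simp
        thus ?thesis using True KF[OF x, where k=k and l=l and y=y] R1[OF x, of k k0] pxy by simp
      next
        case False
        have "H k x ** H l x = - transpose (H k x ** H l x)"
        proof -
          have "transpose (H k x ** H l x) = H l x ** H k x" by (simp add: matrix_transpose_mul sym[OF x])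
          thus ?thesis using R2[OF x False] by metis
        qed
        hence "y \<bullet> ((H k x ** H l x) *v y) = 0" by (rule quad_zero_if)
        thus ?thesis using False KF[OF x, where k=k and l=l and y=y] pxy by simp
      qed
    qed
  qed
qed

end
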